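(* For each $k\le n$, the optimal value of $$\mathcal U^\star_k=\min_{x\in\mathbb R^n,\,y\in\mathbb R^k}\ \langle c,x\rangle+\sum_{i=1}^k\lambda_iy_i^2+\eta^{-1}\|x\|_2^2+\theta\|x\|_0\ \text{ s.t. } Ax\le b,\ \sqrt{\lambda_i}y_i=\sqrt{\lambda_i}\langle v_i,x\rangle,\ i=1,\dots,k$$ satisfies $\mathcal U^\star_k=\min_{z\in\{0,1\}^n}\max_{\alpha\in\mathbb R^k,\beta\in\mathbb R^m_+}H(z,\alpha,\beta)$, where $$H(z,\alpha,\beta)=\theta\sum_{j=1}^nz_j-\beta^\top b-\tfrac14\|\alpha\|_2^2-\tfrac{\eta}{4}(c+V\sqrt\Lambda\alpha+A^\top\beta)^\top\mathrm{diag}(z)(c+V\sqrt\Lambda\alpha+A^\top\beta).$$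
   Context: Let $Q\in\mathbb R^{n\times n}$ be symmetric positive semidefinite with eigendecomposition $Q=\sum_{i=1}^n\lambda_i v_iv_i^\top$, $\lambda_1\ge\cdots\ge\lambda_n\ge0$, $\{v_i\}$ orthonormal. Let $c\in\mathbb R^n$, $A\in\mathbb R^{m\times n}$, $b\in\mathbb R^m$, $\eta>0$, $\theta>0$, $k\le n$, $V=[v_1,\dots,v_k]$, $\Lambda=\mathrm{diag}(\lambda_1,\dots,\lambda_k)$. $\|x\|_0$ is the number of nonzero entries of $x$; infeasible problems have value $+\infty$. *)

theory Defs
  imports "HOL-Analysis.Analysis" "HOL-Library.Extended_Real"
begin

text \<open>Vectors in R^n are represented as functions nat => real, only indices < n matter.
  Matrices are nat => nat => real. The eigenvectors are v i (i < n), with component v i j.\<close>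

definition l0norm :: "nat \<Rightarrow> (nat \<Rightarrow> real) \<Rightarrow> nat" where
  "l0norm n x = card {j. j < n \<and> x j \<noteq> 0}"

definition feasibleU :: "nat \<Rightarrow> nat \<Rightarrow> nat \<Rightarrow> (nat \<Rightarrow> real) \<Rightarrow> (nat \<Rightarrow> nat \<Rightarrow> real)
    \<Rightarrow> (nat \<Rightarrow> nat \<Rightarrow> real) \<Rightarrow> (nat \<Rightarrow> real) \<Rightarrow> (nat \<Rightarrow> real) \<Rightarrow> (nat \<Rightarrow> real) \<Rightarrow> bool" where
  "feasibleU n m k lam v A b x y \<longleftrightarrow>
     (\<forall>r<m. (\<Sum>j<n. A r j * x j) \<le> b r) \<and>
     (\<forall>i<k. sqrt (lam i) * y i = sqrt (lam i) * (\<Sum>j<n. v i j * x j))"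

definition objU :: "nat \<Rightarrow> nat \<Rightarrow> (nat \<Rightarrow> real) \<Rightarrow> (nat \<Rightarrow> real) \<Rightarrow> real \<Rightarrow> real
    \<Rightarrow> (nat \<Rightarrow> real) \<Rightarrow> (nat \<Rightarrow> real) \<Rightarrow> real" where
  "objU n k lam c \<eta> \<theta> x y =
     (\<Sum>j<n. c j * x j) + (\<Sum>i<k. lam i * (y i)\<^sup>2) + (1 / \<eta>) * (\<Sum>j<n. (x j)\<^sup>2)
     + \<theta> * real (l0norm n x)"

text \<open>Optimal value (infimum, +\<infinity> if infeasible) of the problem U*_k.\<close>
definition Ustar :: "nat \<Rightarrow> nat \<Rightarrow> nat \<Rightarrow> (nat \<Rightarrow> real) \<Rightarrow> (nat \<Rightarrow> nat \<Rightarrow> real) \<Rightarrow> (nat \<Rightarrow> real)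
    \<Rightarrow> (nat \<Rightarrow> nat \<Rightarrow> real) \<Rightarrow> (nat \<Rightarrow> real) \<Rightarrow> real \<Rightarrow> real \<Rightarrow> ereal" where
  "Ustar n m k lam v c A b \<eta> \<theta> =
     (INF xy \<in> {(x, y). feasibleU n m k lam v A b x y}.
        ereal (objU n k lam c \<eta> \<theta> (fst xy) (snd xy)))"

definition Hfun :: "nat \<Rightarrow> nat \<Rightarrow> nat \<Rightarrow> (nat \<Rightarrow> real) \<Rightarrow> (nat \<Rightarrow> nat \<Rightarrow> real) \<Rightarrow> (nat \<Rightarrow> real)
    \<Rightarrow> (nat \<Rightarrow> nat \<Rightarrow> real) \<Rightarrow> (nat \<Rightarrow> real) \<Rightarrow> real \<Rightarrow> real
    \<Rightarrow> (nat \<Rightarrow> real) \<Rightarrow> (nat \<Rightarrow> real) \<Rightarrow> (nat \<Rightarrow> real) \<Rightarrow> real" where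
  "Hfun n m k lam v c A b \<eta> \<theta> z \<alpha> \<beta> =
     (let w = (\<lambda>j. c j + (\<Sum>i<k. v i j * sqrt (lam i) * \<alpha> i) + (\<Sum>r<m. A r j * \<beta> r))
      in \<theta> * (\<Sum>j<n. z j) - (\<Sum>r<m. \<beta> r * b r) - (1/4) * (\<Sum>i<k. (\<alpha> i)\<^sup>2)
         - (\<eta> / 4) * (\<Sum>j<n. z j * (w j)\<^sup>2))"

end

theory Submission
  imports Defs
begin


lemma coord_cont [continuous_intros]: "continuous_on S (\<lambda>x::nat\<Rightarrow>real. x j)"
  by (rule continuous_on_subset[OF continuous_on_product_coordinates]) simp

lemma compact_box: "(\<And>j. compact (T j)) \<Longrightarrow> compact (PiE UNIV (T :: nat \<Rightarrow> real set))"
  using compactin_PiE[of "\<lambda>_. euclidean" UNIV T]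
  by (simp add: euclidean_product_topology)

lemma pos_part_sq: "(max 0 (u+h))^2 \<le> (max 0 u)^2 + 2 * max 0 u * h + (h::real)^2"
proof (cases "u + h \<le> 0")
  case True
  then have "(max 0 (u+h))^2 = 0" by simp
  moreover have "(max 0 u)^2 + 2 * max 0 u * h + h^2 = (max 0 u + h)^2" by (simp add: power2_eq_square algebra_simps)
  ultimately show ?thesis by simp
next
  case False
  show ?thesis
  proof (cases "u \<ge> 0")
    case True then show ?thesis using False by (simp add: power2_eq_square algebra_simps)
  next
    case F2: False
    have "(u+h)^2 - h^2 = u * (u + 2*h)" by (simp add: power2_eq_square algebra_simps)
    moreover have "u * (u + 2*h) \<le> 0" using F2 False by (intro mult_nonpos_nonneg) auto
    ultimately show ?thesis using False F2 by simp
  qed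
qed

lemma abs_le_sq1: "\<bar>a::real\<bar> \<le> a^2 + 1"
proof (cases "\<bar>a\<bar> \<le> 1")
  case True then show ?thesis by (smt (verit) zero_le_power2)
next
  case False
  have "\<bar>a\<bar> * 1 \<le> \<bar>a\<bar> * \<bar>a\<bar>" using False by (intro mult_left_mono) auto
  then show ?thesis by (simp add: power2_eq_square abs_mult_self_eq)
qed

locale qp =
  fixes n m k :: nat and lam :: "nat \<Rightarrow> real" and v :: "nat \<Rightarrow> nat \<Rightarrow> real"
    and c b :: "nat \<Rightarrow> real" and A :: "nat \<Rightarrow> nat \<Rightarrow> real" and \<eta> :: real
  assumes lam_nn: "\<And>i. i < k \<Longrightarrow> lam i \<ge> 0" and eta_pos: "\<eta> > 0"
begin

definition pv where "pv i x = (\<Sum>j<n. v i j * x j)"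
definition ax where "ax r x = (\<Sum>j<n. A r j * x j)"
definition fo where "fo x = (\<Sum>j<n. c j * x j) + (\<Sum>i<k. lam i * (pv i x)^2) + (1/\<eta>) * (\<Sum>j<n. (x j)^2)"
definition pen where "pen x = (\<Sum>r<m. (max 0 (ax r x - b r))^2)"
definition FF where "FF t x = fo x + t * pen x"

lemma pen_nn: "pen x \<ge> 0" unfolding pen_def by (intro sum_nonneg) auto

lemma cont_FF: "continuous_on S (FF t)"
  unfolding FF_def fo_def pen_def pv_def ax_def
  by (intro continuous_intros)

lemma quad_nn: "0 \<le> (\<Sum>i<k. lam i * (pv i x)^2)"
  using lam_nn by (auto intro!: sum_nonneg)

lemma FF_ge: "t \<ge> 0 \<Longrightarrow> fo x \<le> FF t x"
  unfolding FF_def using pen_nn[of x] by simp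

lemma FF_mono: "t \<le> t' \<Longrightarrow> FF t x \<le> FF t' x"
  unfolding FF_def using pen_nn[of x] by (simp add: mult_right_mono)

lemma fo_lower: "(1/(2*\<eta>)) * (\<Sum>j<n. (x j)^2) - (\<eta>/2) * (\<Sum>j<n. (c j)^2) \<le> fo x"
proof -
  have t: "(1/(2*\<eta>)) * (x j)^2 - (\<eta>/2) * (c j)^2 \<le> c j * x j + (1/\<eta>) * (x j)^2" for j
  proof -
    have "0 \<le> (x j + \<eta> * c j)^2" by simp
    then have "0 \<le> (1/(2*\<eta>)) * (x j + \<eta> * c j)^2" using eta_pos by simp
    also have "(1/(2*\<eta>)) * (x j + \<eta> * c j)^2 = c j * x j + (1/\<eta>) * (x j)^2 - ((1/(2*\<eta>)) * (x j)^2 - (\<eta>/2) * (c j)^2)"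
      using eta_pos by (simp add: power2_eq_square field_simps)
    finally show ?thesis by simp
  qed
  have "(1/(2*\<eta>)) * (\<Sum>j<n. (x j)^2) - (\<eta>/2) * (\<Sum>j<n. (c j)^2) = (\<Sum>j<n. (1/(2*\<eta>)) * (x j)^2 - (\<eta>/2) * (c j)^2)"
    by (simp add: sum_subtractf sum_distrib_left)
  also have "\<dots> \<le> (\<Sum>j<n. c j * x j + (1/\<eta>) * (x j)^2)" by (intro sum_mono t)
  also have "\<dots> = (\<Sum>j<n. c j * x j) + (1/\<eta>) * (\<Sum>j<n. (x j)^2)" by (simp add: sum.distrib sum_distrib_left)
  also have "\<dots> \<le> fo x" unfolding fo_def using quad_nn[of x] by simp
  finally show ?thesis .
qed

definition sp where "sp z x \<longleftrightarrow> (\<forall>l. x l \<noteq> 0 \<longrightarrow> l < n \<and> z l = (1::real))"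
definition RR where "RR K = 2*\<eta>*\<bar>K\<bar> + \<eta>^2 * (\<Sum>j<n. (c j)^2) + 1"
definition Box where "Box z K = PiE UNIV (\<lambda>j. if j < n \<and> z j = (1::real) then {-RR K..RR K} else {0})"

lemma Box_sp: "x \<in> Box z K \<Longrightarrow> sp z x"
  unfolding Box_def sp_def by (auto simp: PiE_UNIV_domain split: if_splits)

lemma Box_compact: "compact (Box z K)"
  unfolding Box_def by (rule compact_box) auto

lemma level_Box: assumes "sp z x" "fo x \<le> K" shows "x \<in> Box z K"
proof -
  have "(1/(2*\<eta>)) * (\<Sum>j<n. (x j)^2) \<le> K + (\<eta>/2) * (\<Sum>j<n. (c j)^2)"
    using fo_lower[of x] assms(2) by simp
  then have S: "(\<Sum>j<n. (x j)^2) \<le> 2*\<eta>*K + \<eta>^2 * (\<Sum>j<n. (c j)^2)"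
    using eta_pos by (simp add: field_simps power2_eq_square)
  have "\<bar>x j\<bar> \<le> RR K" if "j < n" for j
  proof -
    have "(x j)^2 \<le> (\<Sum>j<n. (x j)^2)" by (rule member_le_sum) (use that in auto)
    moreover have "\<bar>x j\<bar> \<le> (x j)^2 + 1"
      by (rule abs_le_sq1)
    moreover have "2*\<eta>*K \<le> 2*\<eta>*\<bar>K\<bar>" using eta_pos by simp
    ultimately show ?thesis using S unfolding RR_def by linarith
  qed
  note bd = this
  have "x j \<in> (if j < n \<and> z j = 1 then {-RR K..RR K} else {0})" for j
  proof (cases "j < n \<and> z j = 1")
    case True then show ?thesis using bd[of j] by (simp add: abs_le_iff)
  next
    case False then show ?thesis using assms(1) unfolding sp_def by auto
  qed
  then show ?thesis unfolding Box_def by (simp add: PiE_UNIV_domain)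
qed

lemma minimizer: assumes "t \<ge> 0" shows "\<exists>x. sp z x \<and> (\<forall>y. sp z y \<longrightarrow> FF t x \<le> FF t y)"
proof -
  let ?B = "Box z (FF t (\<lambda>_. 0))"
  have "(\<lambda>_. 0) \<in> ?B" by (rule level_Box) (auto simp: sp_def FF_ge assms)
  then obtain x where x: "x \<in> ?B" "\<forall>y\<in>?B. FF t x \<le> FF t y"
    using continuous_attains_inf[OF Box_compact _ cont_FF] by blast
  have "FF t x \<le> FF t y" if "sp z y" for y
  proof (cases "FF t y \<le> FF t (\<lambda>_. 0)")
    case True
    then have "y \<in> ?B" using level_Box[OF that] FF_ge[OF assms, of y] by simp
    then show ?thesis using x by blast
  next
    case False
    have "FF t x \<le> FF t (\<lambda>_. 0)" using x \<open>(\<lambda>_. 0) \<in> ?B\<close> by blast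
    then show ?thesis using False by linarith
  qed
  then show ?thesis using x Box_sp by blast
qed

lemma lin_delta: "j < n \<Longrightarrow> (\<Sum>l<n. a l * ((x l::real) + s * (if l = j then 1 else 0))) = (\<Sum>l<n. a l * x l) + s * a (j::nat)"
proof -
  assume j: "j < n"
  have "a l * (x l + s * (if l = j then 1 else 0)) = a l * x l + (if l = j then s * a j else 0)" for l
    by (cases "l = j") (simp_all add: distrib_left mult.commute)
  then show ?thesis using j by (simp add: sum.distrib sum.delta)
qed

lemma sq_delta: "(\<Sum>l<n. (x l + d * (if l = j then 1 else 0))^2) = (\<Sum>l<n. (x l)^2) + (if j < n then 2 * d * x j + d ^ 2 else (0::real))"
proof -
  have "(x l + d * (if l = j then 1 else 0))^2 = (x l)^2 + (if l = j then 2 * d * x j + d ^ 2 else 0)" for l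
    by (simp add: power2_eq_square algebra_simps)
  then show ?thesis by (simp add: sum.distrib sum.delta)
qed

lemma quad_exp: "(\<Sum>i<k. lam i * (p i + s * q i)^2) = (\<Sum>i<k. lam i * (p i)^2) + s * (\<Sum>i<k. 2 * lam i * p i * q i) + s^2 * (\<Sum>i<k. lam i * (q i)^2)"
  by (simp add: power2_eq_square algebra_simps sum.distrib sum_distrib_left)

lemma stationary:
  assumes t: "t \<ge> 0" and spx: "sp z x" and mn: "\<forall>y. sp z y \<longrightarrow> FF t x \<le> FF t y"
    and j: "j < n" "z j = 1"
  shows "c j + 2*(\<Sum>i<k. lam i * pv i x * v i j) + (2/\<eta>)*x j + (\<Sum>r<m. 2*t*max 0 (ax r x - b r) * A r j) = 0"
    (is "?g = 0")
proof -
  define C where "C = (\<Sum>i<k. lam i * (v i j)^2) + 1/\<eta> + t*(\<Sum>r<m. (A r j)^2)"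
  have Cnn: "C \<ge> 0" unfolding C_def using lam_nn eta_pos t by (auto intro!: add_nonneg_nonneg sum_nonneg mult_nonneg_nonneg)
  have key: "0 \<le> s * ?g + s^2 * C" for s
  proof -
    define y where "y = (\<lambda>l. x l + s * (if l = j then 1 else 0))"
    have spy: "sp z y" using spx j unfolding sp_def y_def by auto
    have pvy: "pv i y = pv i x + s * v i j" for i unfolding pv_def y_def using lin_delta[OF j(1), of "v i"] by simp
    have axy: "ax r y = ax r x + s * A r j" for r unfolding ax_def y_def using lin_delta[OF j(1), of "A r"] by simp
    have cy: "(\<Sum>l<n. c l * y l) = (\<Sum>l<n. c l * x l) + s * c j" unfolding y_def using lin_delta[OF j(1), of c] by simp
    have y2: "(\<Sum>l<n. (y l)^2) = (\<Sum>l<n. (x l)^2) + 2 * s * x j + s ^ 2" unfolding y_def using sq_delta j(1) by simp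
    have foy: "fo y = fo x + s * (c j + 2*(\<Sum>i<k. lam i * pv i x * v i j) + (2/\<eta>)*x j)
        + s^2 * ((\<Sum>i<k. lam i * (v i j)^2) + 1/\<eta>)"
      unfolding fo_def pvy cy y2 quad_exp[of "\<lambda>i. pv i x" s "\<lambda>i. v i j"]
      by (simp add: algebra_simps sum_distrib_left)
    have peny: "pen y \<le> pen x + s * (\<Sum>r<m. 2*max 0 (ax r x - b r) * A r j) + s^2 * (\<Sum>r<m. (A r j)^2)"
    proof -
      have "pen y = (\<Sum>r<m. (max 0 ((ax r x - b r) + s * A r j))^2)" unfolding pen_def axy by (simp add: algebra_simps)
      also have "\<dots> \<le> (\<Sum>r<m. (max 0 (ax r x - b r))^2 + 2 * max 0 (ax r x - b r) * (s * A r j) + (s * A r j)^2)"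
        by (intro sum_mono pos_part_sq)
      also have "\<dots> = pen x + s * (\<Sum>r<m. 2*max 0 (ax r x - b r) * A r j) + s^2 * (\<Sum>r<m. (A r j)^2)"
        unfolding pen_def by (simp add: sum.distrib sum_distrib_left algebra_simps power_mult_distrib)
      finally show ?thesis .
    qed
    have "FF t x \<le> FF t y" using mn spy by blast
    also have "FF t y \<le> fo y + t * (pen x + s * (\<Sum>r<m. 2*max 0 (ax r x - b r) * A r j) + s^2 * (\<Sum>r<m. (A r j)^2))"
      unfolding FF_def using peny t by (simp add: mult_left_mono)
    also have "\<dots> = FF t x + s * ?g + s^2 * C"
      unfolding foy FF_def C_def by (simp add: algebra_simps sum_distrib_left)
    finally show ?thesis by simp
  qed
  show ?thesis
  proof (rule ccontr)
    assume g: "?g \<noteq> 0"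
    define D where "D = C + 1"
    have D: "D > 0" using Cnn unfolding D_def by simp
    define s where "s = - ?g / (2*D)"
    have "s * ?g + s^2 * C \<le> s * ?g + s^2 * D" unfolding D_def using mult_left_mono[of C "C+1" "s^2"] by simp
    also have "\<dots> = - ((?g)^2 / (4*D))" unfolding s_def using D by (simp add: field_simps power2_eq_square)
    also have "\<dots> < 0" using g D by (simp add: divide_neg_pos)
    finally show False using key[of s] by simp
  qed
qed

lemma dual_cert:
  assumes t: "t \<ge> 0" and z01: "\<forall>j<n. z j \<in> {0,1}" and spx: "sp z x"
    and mn: "\<forall>y. sp z y \<longrightarrow> FF t x \<le> FF t y"
  defines "\<alpha> \<equiv> (\<lambda>i. 2 * sqrt (lam i) * pv i x)"
    and "\<beta> \<equiv> (\<lambda>r. 2 * t * max 0 (ax r x - b r))"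
  shows "FF t x \<le> - (\<Sum>r<m. \<beta> r * b r) - (1/4) * (\<Sum>i<k. (\<alpha> i)^2)
     - (\<eta>/4) * (\<Sum>j<n. z j * (c j + (\<Sum>i<k. v i j * sqrt (lam i) * \<alpha> i) + (\<Sum>r<m. A r j * \<beta> r))^2)"
proof -
  define g where "g j = c j + 2*(\<Sum>i<k. lam i * pv i x * v i j) + (2/\<eta>)*x j + (\<Sum>r<m. 2*t*max 0 (ax r x - b r) * A r j)" for j
  define w where "w j = c j + (\<Sum>i<k. v i j * sqrt (lam i) * \<alpha> i) + (\<Sum>r<m. A r j * \<beta> r)" for j
  have g0: "g j = 0" if "j < n" "z j = 1" for j
    unfolding g_def by (rule stationary[OF t spx mn that])
  have sq: "sqrt (lam i) * sqrt (lam i) = lam i" if "i < k" for i using lam_nn[OF that] by simp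
  have w_eq: "w j = g j - (2/\<eta>) * x j" for j
  proof -
    have "(\<Sum>i<k. v i j * sqrt (lam i) * \<alpha> i) = 2*(\<Sum>i<k. lam i * pv i x * v i j)"
      unfolding \<alpha>_def sum_distrib_left
    proof (rule sum.cong)
      fix i assume "i \<in> {..<k}"
      then have "i < k" by simp
      have "v i j * sqrt (lam i) * (2 * sqrt (lam i) * pv i x) = 2 * (sqrt (lam i) * sqrt (lam i)) * pv i x * v i j"
        by (simp only: ac_simps)
      then show "v i j * sqrt (lam i) * (2 * sqrt (lam i) * pv i x) = 2 * (lam i * pv i x * v i j)"
        using sq[OF \<open>i < k\<close>] by simp
    qed simp
    moreover have "(\<Sum>r<m. A r j * \<beta> r) = (\<Sum>r<m. 2*t*max 0 (ax r x - b r) * A r j)"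
      unfolding \<beta>_def by (simp add: algebra_simps)
    ultimately show ?thesis unfolding w_def g_def by simp
  qed
  have xz: "x j = 0" if "j < n" "z j \<noteq> 1" for j using spx that unfolding sp_def by auto
  have zw: "z j * (w j)^2 = (4/\<eta>^2) * (x j)^2" if "j < n" for j
  proof (cases "z j = 1")
    case True
    have "w j = -(2/\<eta>) * x j" using g0[OF that True] w_eq[of j] by simp
    then show ?thesis using True by (simp add: power_mult_distrib power_divide)
  next
    case False then have "z j = 0" using z01 that by auto
    then show ?thesis using xz[OF that False] by simp
  qed
  have T3: "(\<eta>/4) * (\<Sum>j<n. z j * (w j)^2) = (1/\<eta>) * (\<Sum>j<n. (x j)^2)"
  proof -
    have "(\<Sum>j<n. z j * (w j)^2) = (\<Sum>j<n. (4/\<eta>^2) * (x j)^2)" by (rule sum.cong) (simp_all add: zw)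
    also have "\<dots> = (4/\<eta>^2) * (\<Sum>j<n. (x j)^2)" by (simp add: sum_distrib_left)
    finally show ?thesis using eta_pos by (simp add: power2_eq_square)
  qed
  have T2: "(1/4) * (\<Sum>i<k. (\<alpha> i)^2) = (\<Sum>i<k. lam i * (pv i x)^2)"
    unfolding \<alpha>_def sum_distrib_left
    by (rule sum.cong) (auto simp: power_mult_distrib lam_nn)
  have xg0: "(\<Sum>j<n. x j * g j) = 0"
    by (rule sum.neutral) (use xz g0 in fastforce)
  have xg: "(\<Sum>j<n. x j * g j) = (\<Sum>j<n. c j * x j) + 2 * (\<Sum>i<k. lam i * (pv i x)^2) + (2/\<eta>) * (\<Sum>j<n. (x j)^2)
      + (\<Sum>r<m. \<beta> r * ax r x)"
  proof -
    have a: "(\<Sum>j<n. x j * (\<Sum>i<k. lam i * pv i x * v i j)) = (\<Sum>i<k. lam i * (pv i x)^2)"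
      unfolding pv_def sum_distrib_left power2_eq_square
      by (subst sum.swap) (simp add: sum_distrib_left algebra_simps)
    have b: "(\<Sum>j<n. x j * (\<Sum>r<m. 2*t*max 0 (ax r x - b r) * A r j)) = (\<Sum>r<m. \<beta> r * ax r x)"
      unfolding \<beta>_def ax_def sum_distrib_left
      by (subst sum.swap) (simp add: algebra_simps)
    have pw: "x j * g j = c j * x j + 2 * (x j * (\<Sum>i<k. lam i * pv i x * v i j))
       + (2/\<eta>) * (x j)^2 + x j * (\<Sum>r<m. 2*t*max 0 (ax r x - b r) * A r j)" for j
      unfolding g_def by (simp add: distrib_left power2_eq_square)
    have "(\<Sum>j<n. x j * g j) = (\<Sum>j<n. c j * x j) + 2 * (\<Sum>j<n. x j * (\<Sum>i<k. lam i * pv i x * v i j))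
       + (2/\<eta>) * (\<Sum>j<n. (x j)^2) + (\<Sum>j<n. x j * (\<Sum>r<m. 2*t*max 0 (ax r x - b r) * A r j))"
      unfolding pw by (simp only: sum.distrib sum_distrib_left)
    then show ?thesis using a b by simp
  qed
  have bpen: "t * pen x \<le> (\<Sum>r<m. \<beta> r * (ax r x - b r))"
    unfolding pen_def \<beta>_def sum_distrib_left
  proof (rule sum_mono)
    fix r
    have "max 0 (ax r x - b r) * (ax r x - b r) = (max 0 (ax r x - b r))^2"
      by (simp add: power2_eq_square max_def)
    moreover have "0 \<le> t * (max 0 (ax r x - b r))^2" using t by simp
    ultimately show "t * (max 0 (ax r x - b r))^2 \<le> 2 * t * max 0 (ax r x - b r) * (ax r x - b r)"
      by (simp add: algebra_simps)
  qed
  have "(\<Sum>r<m. \<beta> r * (ax r x - b r)) = (\<Sum>r<m. \<beta> r * ax r x) - (\<Sum>r<m. \<beta> r * b r)"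
    by (simp add: algebra_simps sum_subtractf)
  then show ?thesis
    using xg0 xg bpen unfolding FF_def fo_def w_def[symmetric] T3 T2 by linarith
qed


definition dual where "dual z \<alpha> \<beta> = - (\<Sum>r<m. \<beta> r * b r) - (1/4) * (\<Sum>i<k. (\<alpha> i)^2)
     - (\<eta>/4) * (\<Sum>j<n. z j * (c j + (\<Sum>i<k. v i j * sqrt (lam i) * \<alpha> i) + (\<Sum>r<m. A r j * \<beta> r))^2)"

lemma penalty:
  assumes hyp: "\<forall>x. sp z x \<longrightarrow> (\<forall>r<m. ax r x \<le> b r) \<longrightarrow> fo x > M"
  shows "\<exists>t\<ge>0. \<forall>x. sp z x \<longrightarrow> FF t x > M"
proof (rule ccontr)
  assume "\<not> ?thesis"
  then have ex: "\<exists>x. sp z x \<and> FF t x \<le> M" if "t \<ge> 0" for t using that by (meson not_le)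
  let ?B = "Box z M"
  let ?f = "\<lambda>t::nat. {x. FF (real t) x \<le> M}"
  have "?B \<inter> (\<Inter>t\<in>UNIV. ?f t) \<noteq> {}"
  proof (rule compact_imp_fip_image[OF Box_compact])
    fix t :: nat show "closed (?f t)"
      by (rule closed_Collect_le) (auto intro: cont_FF)
  next
    fix J :: "nat set" assume J: "finite J" "J \<subseteq> UNIV"
    define N where "N = Max (insert 0 J)"
    obtain x where x: "sp z x" "FF (real N) x \<le> M" using ex[of "real N"] by auto
    have "x \<in> ?B" using level_Box[OF x(1)] FF_ge[of "real N" x] x(2) by simp
    moreover have "x \<in> ?f t" if "t \<in> J" for t
    proof -
      have "t \<le> N" unfolding N_def using J that by simp
      then show ?thesis using FF_mono[of "real t" "real N" x] x(2) by simp
    qed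
    ultimately show "?B \<inter> (\<Inter>t\<in>J. ?f t) \<noteq> {}" by blast
  qed
  then obtain x where x: "x \<in> ?B" "\<And>t::nat. FF (real t) x \<le> M" by blast
  have spx: "sp z x" using Box_sp x(1) by blast
  have p0: "pen x = 0"
  proof (rule ccontr)
    assume "pen x \<noteq> 0"
    then have pp: "pen x > 0" using pen_nn[of x] by simp
    obtain t :: nat where t: "(M - fo x) / pen x < real t" using reals_Archimedean2 by blast
    then have "M - fo x < real t * pen x" using pp by (simp add: field_simps)
    then show False using x(2)[of t] unfolding FF_def by simp
  qed
  have "\<forall>r<m. ax r x \<le> b r"
  proof (intro allI impI)
    fix r assume r: "r < m"
    have "\<forall>r\<in>{..<m}. (max 0 (ax r x - b r))^2 = 0"
      using p0 unfolding pen_def by (subst (asm) sum_nonneg_eq_0_iff) auto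
    then have "b r \<le> ax r x \<longrightarrow> ax r x = b r" using r by (auto simp: max_def split: if_splits)
    then show "ax r x \<le> b r" by linarith
  qed
  moreover have "fo x \<le> M" using x(2)[of 0] unfolding FF_def by simp
  ultimately show False using hyp spx by force
qed

lemma strong:
  assumes z01: "\<forall>j<n. z j \<in> {0,1}"
    and hyp: "\<forall>x. sp z x \<longrightarrow> (\<forall>r<m. ax r x \<le> b r) \<longrightarrow> fo x > M"
  shows "\<exists>\<alpha> \<beta>. (\<forall>r<m. \<beta> r \<ge> 0) \<and> M < dual z \<alpha> \<beta>"
proof -
  obtain t where t: "t \<ge> 0" "\<forall>x. sp z x \<longrightarrow> FF t x > M" using penalty[OF hyp] by blast
  obtain x where x: "sp z x" "\<forall>y. sp z y \<longrightarrow> FF t x \<le> FF t y" using minimizer[OF t(1)] by blast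
  have "FF t x \<le> dual z (\<lambda>i. 2 * sqrt (lam i) * pv i x) (\<lambda>r. 2 * t * max 0 (ax r x - b r))"
    unfolding dual_def by (rule dual_cert[OF t(1) z01 x])
  moreover have "\<forall>r<m. 2 * t * max 0 (ax r x - b r) \<ge> 0" using t(1) by simp
  moreover have "M < FF t x" using t(2) x(1) by blast
  ultimately show ?thesis by (meson order_less_le_trans)
qed

lemma weak:
  assumes z01: "\<forall>j<n. z j \<in> {0,1}" and xz: "\<forall>j<n. z j = 0 \<longrightarrow> x j = 0"
    and feas: "\<forall>r<m. ax r x \<le> b r" and bnn: "\<forall>r<m. \<beta> r \<ge> 0"
  shows "dual z \<alpha> \<beta> \<le> fo x"
proof -
  define w where "w j = c j + (\<Sum>i<k. v i j * sqrt (lam i) * \<alpha> i) + (\<Sum>r<m. A r j * \<beta> r)" for j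
  have b1: "(\<Sum>r<m. \<beta> r * (ax r x - b r)) \<le> 0"
    by (rule sum_nonpos) (use feas bnn in \<open>auto intro: mult_nonneg_nonpos\<close>)
  have sw: "(\<Sum>j<n. c j * x j) + (\<Sum>r<m. \<beta> r * ax r x) = (\<Sum>j<n. x j * w j) - (\<Sum>i<k. sqrt (lam i) * \<alpha> i * pv i x)"
  proof -
    have e1: "(\<Sum>j<n. x j * (\<Sum>i<k. v i j * sqrt (lam i) * \<alpha> i)) = (\<Sum>i<k. sqrt (lam i) * \<alpha> i * pv i x)"
      unfolding pv_def sum_distrib_left by (subst sum.swap) (simp add: algebra_simps)
    have e2: "(\<Sum>j<n. x j * (\<Sum>r<m. A r j * \<beta> r)) = (\<Sum>r<m. \<beta> r * ax r x)"
      unfolding ax_def sum_distrib_left by (subst sum.swap) (simp add: algebra_simps)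
    have "(\<Sum>j<n. x j * w j) = (\<Sum>j<n. c j * x j) + (\<Sum>j<n. x j * (\<Sum>i<k. v i j * sqrt (lam i) * \<alpha> i))
        + (\<Sum>j<n. x j * (\<Sum>r<m. A r j * \<beta> r))"
      unfolding w_def by (simp add: distrib_left sum.distrib mult.commute)
    then show ?thesis using e1 e2 by simp
  qed
  have q1: "- (1/4) * (\<Sum>i<k. (\<alpha> i)^2) \<le> (\<Sum>i<k. lam i * (pv i x)^2 - sqrt (lam i) * \<alpha> i * pv i x)"
  proof -
    have "- (1/4) * (\<Sum>i<k. (\<alpha> i)^2) = (\<Sum>i<k. - (1/4) * (\<alpha> i)^2)" by (simp add: sum_distrib_left)
    also have "\<dots> \<le> (\<Sum>i<k. lam i * (pv i x)^2 - sqrt (lam i) * \<alpha> i * pv i x)"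
    proof (rule sum_mono)
      fix i assume "i \<in> {..<k}"
      then have l: "sqrt (lam i) * sqrt (lam i) = lam i" using lam_nn by simp
      have "0 \<le> (sqrt (lam i) * pv i x - \<alpha> i / 2)^2" by simp
      also have "\<dots> = (sqrt (lam i) * sqrt (lam i)) * (pv i x)^2 - sqrt (lam i) * \<alpha> i * pv i x + (1/4) * (\<alpha> i)^2"
        by (simp add: power2_eq_square algebra_simps)
      finally show "- (1/4) * (\<alpha> i)^2 \<le> lam i * (pv i x)^2 - sqrt (lam i) * \<alpha> i * pv i x" using l by simp
    qed
    finally show ?thesis .
  qed
  have q2: "- (\<eta>/4) * (\<Sum>j<n. z j * (w j)^2) \<le> (\<Sum>j<n. x j * w j + (1/\<eta>) * (x j)^2)"
  proof -
    have "- (\<eta>/4) * (\<Sum>j<n. z j * (w j)^2) = (\<Sum>j<n. - (\<eta>/4) * (z j * (w j)^2))" by (simp add: sum_distrib_left)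
    also have "\<dots> \<le> (\<Sum>j<n. x j * w j + (1/\<eta>) * (x j)^2)"
    proof (rule sum_mono)
      fix j assume "j \<in> {..<n}"
      then have j: "j < n" by simp
      show "- (\<eta>/4) * (z j * (w j)^2) \<le> x j * w j + (1/\<eta>) * (x j)^2"
      proof (cases "z j = 0")
        case True then show ?thesis using xz j by simp
      next
        case False then have "z j = 1" using z01 j by auto
        have "0 \<le> (1/\<eta>) * (x j + (\<eta>/2) * w j)^2" using eta_pos by simp
        also have "\<dots> = x j * w j + (1/\<eta>) * (x j)^2 + (\<eta>/4) * (w j)^2"
          using eta_pos by (simp add: power2_eq_square field_simps)
        finally show ?thesis using \<open>z j = 1\<close> by simp
      qed
    qed
    finally show ?thesis .
  qed
  have "dual z \<alpha> \<beta> = - (\<Sum>r<m. \<beta> r * b r) - (1/4) * (\<Sum>i<k. (\<alpha> i)^2) - (\<eta>/4) * (\<Sum>j<n. z j * (w j)^2)"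
    unfolding dual_def w_def by simp
  moreover have "(\<Sum>r<m. \<beta> r * (ax r x - b r)) = (\<Sum>r<m. \<beta> r * ax r x) - (\<Sum>r<m. \<beta> r * b r)"
    by (simp add: algebra_simps sum_subtractf)
  moreover have "(\<Sum>i<k. lam i * (pv i x)^2 - sqrt (lam i) * \<alpha> i * pv i x) = (\<Sum>i<k. lam i * (pv i x)^2) - (\<Sum>i<k. sqrt (lam i) * \<alpha> i * pv i x)"
    by (simp add: sum_subtractf)
  moreover have "(\<Sum>j<n. x j * w j + (1/\<eta>) * (x j)^2) = (\<Sum>j<n. x j * w j) + (1/\<eta>) * (\<Sum>j<n. (x j)^2)"
    by (simp add: sum.distrib sum_distrib_left)
  ultimately show ?thesis using b1 sw q1 q2 unfolding fo_def by linarith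
qed
end


lemma sum_ind_card: "(\<Sum>j<(n::nat). if P j then 1 else (0::real)) = real (card {j. j < n \<and> P j})"
proof -
  have "(\<Sum>j<n. if P j then 1 else (0::real)) = (\<Sum>j\<in>{j\<in>{..<n}. P j}. 1)"
    by (subst sum.inter_filter) auto
  moreover have "{j\<in>{..<n}. P j} = {j. j < n \<and> P j}" by auto
  ultimately show ?thesis by simp
qed



theorem propositionC1:
  fixes n m k :: nat
    and Q :: "nat \<Rightarrow> nat \<Rightarrow> real"
    and lam :: "nat \<Rightarrow> real"
    and v :: "nat \<Rightarrow> nat \<Rightarrow> real"
    and c b :: "nat \<Rightarrow> real"
    and A :: "nat \<Rightarrow> nat \<Rightarrow> real"
    and \<eta> \<theta> :: real
  assumes Q_sym: "\<forall>i<n. \<forall>j<n. Q i j = Q j i"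
    and Q_psd: "\<forall>x::nat \<Rightarrow> real. (\<Sum>i<n. \<Sum>j<n. x i * Q i j * x j) \<ge> 0"
    and Q_eig: "\<forall>i<n. \<forall>j<n. Q i j = (\<Sum>l<n. lam l * v l i * v l j)"
    and lam_sorted: "\<forall>i j. i \<le> j \<longrightarrow> j < n \<longrightarrow> lam j \<le> lam i"
    and lam_nonneg: "\<forall>i<n. lam i \<ge> 0"
    and v_orthonormal: "\<forall>i<n. \<forall>i'<n. (\<Sum>j<n. v i j * v i' j) = (if i = i' then 1 else 0)"
    and \<eta>_pos: "\<eta> > 0"
    and \<theta>_pos: "\<theta> > 0"
    and k_le: "k \<le> n"
  shows "Ustar n m k lam v c A b \<eta> \<theta> =
    (INF z \<in> {z. \<forall>j<n. z j \<in> {0, 1}}.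
       SUP \<alpha>\<beta> \<in> {(\<alpha>, \<beta>). \<forall>r<m. \<beta> r \<ge> 0}.
         ereal (Hfun n m k lam v c A b \<eta> \<theta> z (fst \<alpha>\<beta>) (snd \<alpha>\<beta>)))"
proof -
  interpret qp n m k lam v c b A \<eta>
    by unfold_locales (use lam_nonneg k_le \<eta>_pos in auto)
  let ?Z = "{z. \<forall>j<n. z j \<in> {0::real, 1}}"
  let ?P = "{(\<alpha>::nat\<Rightarrow>real, \<beta>). \<forall>r<m. \<beta> r \<ge> (0::real)}"
  let ?T = "\<lambda>z. SUP \<alpha>\<beta> \<in> ?P. ereal (Hfun n m k lam v c A b \<eta> \<theta> z (fst \<alpha>\<beta>) (snd \<alpha>\<beta>))"
  have H: "Hfun n m k lam v c A b \<eta> \<theta> z \<alpha> \<beta> = \<theta> * (\<Sum>j<n. z j) + dual z \<alpha> \<beta>" for z \<alpha> \<beta>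
    unfolding Hfun_def dual_def Let_def by simp
  have feas: "feasibleU n m k lam v A b x y \<longleftrightarrow> (\<forall>r<m. ax r x \<le> b r) \<and>
      (\<forall>i<k. sqrt (lam i) * y i = sqrt (lam i) * pv i x)" for x y
    unfolding feasibleU_def ax_def pv_def by simp
  have obj: "objU n k lam c \<eta> \<theta> x y = fo x + \<theta> * real (l0norm n x)"
    if "\<forall>i<k. sqrt (lam i) * y i = sqrt (lam i) * pv i x" for x y
  proof -
    have "(\<Sum>i<k. lam i * (y i)^2) = (\<Sum>i<k. lam i * (pv i x)^2)"
    proof (rule sum.cong)
      fix i assume "i \<in> {..<k}"
      then have i: "i < k" by simp
      have "sqrt (lam i) * y i = sqrt (lam i) * pv i x" using that i by blast
      then have "(sqrt (lam i) * y i)^2 = (sqrt (lam i) * pv i x)^2" by (simp only:)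
      then show "lam i * (y i)^2 = lam i * (pv i x)^2" using lam_nn[OF i] by (simp add: power_mult_distrib)
    qed simp
    then show ?thesis unfolding objU_def fo_def pv_def by simp
  qed
  have Uge: "(INF z \<in> ?Z. ?T z) \<le> Ustar n m k lam v c A b \<eta> \<theta>"
    unfolding Ustar_def
  proof (rule INF_greatest)
    fix xy assume "xy \<in> {(x, y). feasibleU n m k lam v A b x y}"
    then obtain x y where xy: "xy = (x, y)" and f: "feasibleU n m k lam v A b x y" by auto
    define zx where "zx j = (if x j \<noteq> 0 then 1 else (0::real))" for j
    have zxZ: "zx \<in> ?Z" unfolding zx_def by auto
    have szx: "(\<Sum>j<n. zx j) = real (l0norm n x)" unfolding zx_def l0norm_def by (rule sum_ind_card)
    have "?T zx \<le> ereal (objU n k lam c \<eta> \<theta> x y)"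
    proof (rule SUP_least)
      fix p assume "p \<in> ?P"
      then obtain \<alpha> \<beta> where p: "p = (\<alpha>, \<beta>)" "\<forall>r<m. \<beta> r \<ge> 0" by auto
      have "dual zx \<alpha> \<beta> \<le> fo x"
        by (rule weak) (use zxZ p f in \<open>auto simp: feas zx_def split: if_splits\<close>)
      then show "ereal (Hfun n m k lam v c A b \<eta> \<theta> zx (fst p) (snd p)) \<le> ereal (objU n k lam c \<eta> \<theta> x y)"
      proof -
        have o: "objU n k lam c \<eta> \<theta> x y = fo x + \<theta> * real (l0norm n x)" using f by (intro obj) (simp add: feas)
        show ?thesis unfolding p fst_conv snd_conv H o szx using \<open>dual zx \<alpha> \<beta> \<le> fo x\<close> by simp
      qed
    qed
    then have "(INF z \<in> ?Z. ?T z) \<le> ereal (objU n k lam c \<eta> \<theta> x y)"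
      using INF_lower[OF zxZ, of ?T] by (meson order_trans)
    then show "(INF z \<in> ?Z. ?T z) \<le> ereal (objU n k lam c \<eta> \<theta> (fst xy) (snd xy))" using xy by simp
  qed
  have Ule: "Ustar n m k lam v c A b \<eta> \<theta> \<le> ?T z" if zZ: "z \<in> ?Z" for z
  proof (rule ccontr)
    assume "\<not> ?thesis"
    then have "?T z < Ustar n m k lam v c A b \<eta> \<theta>" by simp
    then obtain M' where M': "?T z < ereal M'" "ereal M' < Ustar n m k lam v c A b \<eta> \<theta>"
      using ereal_dense2 by blast
    have sz: "(\<Sum>j<n. z j) = real (card {j. j < n \<and> z j = 1})"
    proof -
      have "(\<Sum>j<n. z j) = (\<Sum>j<n. if z j = 1 then 1 else 0)" using zZ by (intro sum.cong) auto
      then show ?thesis using sum_ind_card by simp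
    qed
    have hyp: "\<forall>x. sp z x \<longrightarrow> (\<forall>r<m. ax r x \<le> b r) \<longrightarrow> fo x > M' - \<theta> * (\<Sum>j<n. z j)"
    proof (intro allI impI)
      fix x assume spx: "sp z x" and fx: "\<forall>r<m. ax r x \<le> b r"
      have fe: "feasibleU n m k lam v A b x (\<lambda>i. pv i x)" using fx by (simp add: feas)
      have "Ustar n m k lam v c A b \<eta> \<theta> \<le> ereal (objU n k lam c \<eta> \<theta> x (\<lambda>i. pv i x))"
        unfolding Ustar_def by (rule INF_lower2[of "(x, \<lambda>i. pv i x)"]) (use fe in auto)
      then have "ereal M' < ereal (objU n k lam c \<eta> \<theta> x (\<lambda>i. pv i x))" using M'(2) by (meson order_less_le_trans)
      then have "M' < objU n k lam c \<eta> \<theta> x (\<lambda>i. pv i x)" by simp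
      moreover have "objU n k lam c \<eta> \<theta> x (\<lambda>i. pv i x) = fo x + \<theta> * real (l0norm n x)" by (rule obj) simp
      moreover have "l0norm n x \<le> card {j. j < n \<and> z j = 1}"
        unfolding l0norm_def by (rule card_mono) (use spx in \<open>auto simp: sp_def\<close>)
      then have "\<theta> * real (l0norm n x) \<le> \<theta> * (\<Sum>j<n. z j)" using \<theta>_pos sz by simp
      ultimately show "fo x > M' - \<theta> * (\<Sum>j<n. z j)" by linarith
    qed
    obtain \<alpha> \<beta> where ab: "\<forall>r<m. \<beta> r \<ge> 0" "M' - \<theta> * (\<Sum>j<n. z j) < dual z \<alpha> \<beta>"
      using strong[OF _ hyp] zZ by blast
    have abP: "(\<alpha>, \<beta>) \<in> ?P" using ab(1) by simp
    have le: "ereal (Hfun n m k lam v c A b \<eta> \<theta> z \<alpha> \<beta>) \<le> ?T z"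
      using SUP_upper[OF abP, of "\<lambda>\<alpha>\<beta>. ereal (Hfun n m k lam v c A b \<eta> \<theta> z (fst \<alpha>\<beta>) (snd \<alpha>\<beta>))"] by simp
    have "M' < Hfun n m k lam v c A b \<eta> \<theta> z \<alpha> \<beta>" using ab(2) unfolding H by simp
    then have "ereal M' < ereal (Hfun n m k lam v c A b \<eta> \<theta> z \<alpha> \<beta>)" by simp
    then have "ereal M' < ?T z" using le by (rule order_less_le_trans)
    then show False using M'(1) by simp
  qed
  have "Ustar n m k lam v c A b \<eta> \<theta> \<le> (INF z \<in> ?Z. ?T z)" by (rule INF_greatest) (rule Ule)
  with Uge show ?thesis by (rule antisym[rotated])
qed

end
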